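(* Put $A=y+x\in\mathcal H''$, so that $A^*=x-y$. (a) Every $h\in\mathcal H''$ can be written uniquely as $$h=\sum c_{a\delta b}\,(A^* )^a s^\delta A^b,\qquad a,b\in\mathbb Z_{\ge0},\ \delta\in\{0,1\},$$ with finitely many nonzero coefficients $c_{a\delta b}\in\mathbb C$. (b) Define the coinvariant $\llbracket h\rrbracket=c_{000}+c_{010}$, and for $f,g\in\mathbb C[x]\subset\mathcal H''$ put $\{f,g\}=\llbracket f^*g\rrbracket$. Then for all $a,b\in\mathbb Z_{\ge0}$: $$\{x^a,x^b\}=0\quad\text{if } a+b \text{ is odd},$$ $$\{x^a,x^b\}=2^{-p}\prod_{i=0}^{p-1}\big(\tfrac12+k+i\big)\quad\text{if } a+b=2p.$$
   Context: The rational DAHA $\mathcal H''$ of type $A_1$ (with parameter $k\in\mathbb C$) is the $\mathbb C$-algebra generated by $x,y,s$ subject to $$[y,x]=\tfrac12+ks,\qquad s^2=1,\qquad sxs=-x,\qquad sys=-y.$$ $*$ denotes the anti-involution of $\mathcal H''$ with $x^*=x$, $y^*=-y$, $s^*=s$. The subalgebra generated by $x$ is identified with $\mathbb C[x]$. *)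

theory Defs
  imports Complex_Main "HOL-Library.Poly_Mapping"
begin

text \<open>The rational DAHA H'' of type A1 is realised as the free associative
complex algebra on generators x, y, s (finitely supported complex functions on
words, with concatenation-convolution product) modulo the two-sided ideal
generated by the defining relations.  Equality in H'' is congruence modulo
that ideal.\<close>

datatype gen = GX | GY | GS

type_synonym fa = "gen list \<Rightarrow>\<^sub>0 complex"

definition fmul :: "fa \<Rightarrow> fa \<Rightarrow> fa" where
  "fmul p q = (\<Sum>u\<in>Poly_Mapping.keys p. \<Sum>v\<in>Poly_Mapping.keys q.
      Poly_Mapping.single (u @ v) (Poly_Mapping.lookup p u * Poly_Mapping.lookup q v))"

definition fscal :: "complex \<Rightarrow> fa" where
  "fscal c = Poly_Mapping.single [] c"

definition fone :: fa where "fone = fscal 1"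

definition gx :: fa where "gx = Poly_Mapping.single [GX] 1"
definition gy :: fa where "gy = Poly_Mapping.single [GY] 1"
definition gs :: fa where "gs = Poly_Mapping.single [GS] 1"

definition fpow :: "fa \<Rightarrow> nat \<Rightarrow> fa" where
  "fpow p n = (fmul p ^^ n) fone"

definition relators :: "complex \<Rightarrow> fa set" where
  "relators k = { fmul gy gx - fmul gx gy - fscal (1/2) - fmul (fscal k) gs,
                  fmul gs gs - fone,
                  fmul (fmul gs gx) gs + gx,
                  fmul (fmul gs gy) gs + gy }"

inductive_set dahaIdeal :: "complex \<Rightarrow> fa set" for k :: complex where
  rel: "r \<in> relators k \<Longrightarrow> r \<in> dahaIdeal k"
| zero: "0 \<in> dahaIdeal k"
| add: "a \<in> dahaIdeal k \<Longrightarrow> b \<in> dahaIdeal k \<Longrightarrow> a + b \<in> dahaIdeal k"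
| lmul: "a \<in> dahaIdeal k \<Longrightarrow> fmul u a \<in> dahaIdeal k"
| rmul: "a \<in> dahaIdeal k \<Longrightarrow> fmul a u \<in> dahaIdeal k"

definition fstar :: "fa \<Rightarrow> fa" where
  "fstar p = (\<Sum>u\<in>Poly_Mapping.keys p.
      Poly_Mapping.single (rev u) ((-1) ^ count_list u GY * Poly_Mapping.lookup p u))"

definition Aop :: fa where "Aop = gy + gx"
definition Astar :: fa where "Astar = gx - gy"

definition basis_elem :: "nat \<times> bool \<times> nat \<Rightarrow> fa" where
  "basis_elem t = (case t of (a, d, b) \<Rightarrow>
      fmul (fmul (fpow Astar a) (if d then gs else fone)) (fpow Aop b))"

definition basis_sum :: "(nat \<times> bool \<times> nat \<Rightarrow>\<^sub>0 complex) \<Rightarrow> fa" where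
  "basis_sum c = (\<Sum>t\<in>Poly_Mapping.keys c. fmul (fscal (Poly_Mapping.lookup c t)) (basis_elem t))"

definition dahaRep :: "complex \<Rightarrow> fa \<Rightarrow> (nat \<times> bool \<times> nat \<Rightarrow>\<^sub>0 complex) \<Rightarrow> bool" where
  "dahaRep k h c \<longleftrightarrow> h - basis_sum c \<in> dahaIdeal k"

definition coinv :: "complex \<Rightarrow> fa \<Rightarrow> complex" where
  "coinv k h = (let c = (THE c. dahaRep k h c) in
      Poly_Mapping.lookup c (0, False, 0) + Poly_Mapping.lookup c (0, True, 0))"

definition bracket :: "complex \<Rightarrow> fa \<Rightarrow> fa \<Rightarrow> complex" where
  "bracket k f g = coinv k (fmul (fstar f) g)"

definition xpow :: "nat \<Rightarrow> fa" where "xpow a = fpow gx a"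

end

theory Submission
  imports Defs
begin

instantiation list :: (type) monoid_add
begin
definition zero_list_def: "0 = []"
definition plus_list_def: "plus = (@)"
instance by standard (auto simp: zero_list_def plus_list_def)
end

lemma pm_expand: "p = (\<Sum>u\<in>Poly_Mapping.keys p. Poly_Mapping.single u (Poly_Mapping.lookup p u))"
  by (rule poly_mapping_eqI)
     (auto simp: lookup_sum lookup_single when_def in_keys_iff)

lemma fmul_eq: "fmul p q = p * q"
proof -
  have "p * q = (\<Sum>u\<in>Poly_Mapping.keys p. Poly_Mapping.single u (Poly_Mapping.lookup p u)) *
     (\<Sum>v\<in>Poly_Mapping.keys q. Poly_Mapping.single v (Poly_Mapping.lookup q v))"
    using pm_expand[of p] pm_expand[of q] by simp
  also have "\<dots> = fmul p q"
    by (simp add: fmul_def sum_distrib_left sum_distrib_right mult_single plus_list_def sum.swap[of _ "Poly_Mapping.keys q"])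
  finally show ?thesis by simp
qed

lemma fone_eq: "fone = 1"
  by (simp add: fone_def fscal_def flip: zero_list_def)

lemma fscal_central: "fscal c * p = p * fscal c"
proof -
  have "fscal c * p = fscal c * (\<Sum>u\<in>Poly_Mapping.keys p. Poly_Mapping.single u (Poly_Mapping.lookup p u))"
    using pm_expand[of p] by simp
  also have "\<dots> = (\<Sum>u\<in>Poly_Mapping.keys p. Poly_Mapping.single u (Poly_Mapping.lookup p u)) * fscal c"
    by (simp add: fscal_def sum_distrib_left sum_distrib_right mult_single plus_list_def zero_list_def mult.commute)
  finally show ?thesis using pm_expand[of p] by simp
qed

lemma fscal_add: "fscal (a + b) = fscal a + fscal b"
  by (simp add: fscal_def single_add)
lemma fscal_mult: "fscal (a * b) = fscal a * fscal b"
  by (simp add: fscal_def mult_single zero_list_def plus_list_def)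
lemma fscal_one: "fscal 1 = 1"
  using fone_eq fone_def by simp
lemma fscal_zero: "fscal 0 = 0"
  by (simp add: fscal_def)
lemma fscal_minus: "fscal (- a) = - fscal a"
  by (simp add: fscal_def single_uminus)
lemma fscal_diff: "fscal (a - b) = fscal a - fscal b"
  by (simp add: fscal_def single_diff)

lemma fpow_eq: "fpow p n = p ^ n"
  by (induct n) (simp_all add: fpow_def fone_eq fmul_eq)

type_synonym V = "nat \<Rightarrow> bool \<Rightarrow> nat \<Rightarrow> complex"

definition LAs :: "V \<Rightarrow> V" where
  "LAs f = (\<lambda>a d b. if a = 0 then 0 else f (a - 1) d b)"
definition LS :: "V \<Rightarrow> V" where
  "LS f = (\<lambda>a d b. (-1) ^ a * f a (\<not> d) b)"
definition LA :: "complex \<Rightarrow> V \<Rightarrow> V" where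
  "LA k f = (\<lambda>a d b. (if b = 0 then 0 else (if d then -1 else 1) * f a d (b - 1))
     + of_nat (Suc a) * f (Suc a) d b + (if even a then 2 * k * f (Suc a) (\<not> d) b else 0))"
definition Lg :: "complex \<Rightarrow> gen \<Rightarrow> V \<Rightarrow> V" where
  "Lg k g f = (case g of GX \<Rightarrow> (\<lambda>a d b. (LA k f a d b + LAs f a d b) / 2)
     | GY \<Rightarrow> (\<lambda>a d b. (LA k f a d b - LAs f a d b) / 2) | GS \<Rightarrow> LS f)"

primrec W :: "complex \<Rightarrow> gen list \<Rightarrow> V \<Rightarrow> V" where
  "W k [] f = f"
| "W k (g # w) f = Lg k g (W k w f)"

definition R :: "complex \<Rightarrow> fa \<Rightarrow> V \<Rightarrow> V" where
  "R k p f = (\<lambda>a d b. \<Sum>w\<in>Poly_Mapping.keys p. Poly_Mapping.lookup p w * W k w f a d b)"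

definition lin :: "(V \<Rightarrow> V) \<Rightarrow> bool" where
  "lin T \<longleftrightarrow> (\<forall>f g c. T (\<lambda>a d b. c * f a d b + g a d b) = (\<lambda>a d b. c * T f a d b + T g a d b))"

lemma lin_app: "lin T \<Longrightarrow> T (\<lambda>a d b. c * f a d b + g a d b) = (\<lambda>a d b. c * T f a d b + T g a d b)"
  unfolding lin_def by blast

lemma lin_zero: "lin T \<Longrightarrow> T (\<lambda>a d b. 0) = (\<lambda>a d b. 0)"
  using lin_app[of T "-1" "\<lambda>a d b. 0" "\<lambda>a d b. 0"] by simp

lemma lin_sum: assumes "lin T" "finite I" shows
   "T (\<lambda>a d b. \<Sum>i\<in>I. c i * f i a d b) = (\<lambda>a d b. \<Sum>i\<in>I. c i * T (f i) a d b)"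
  using assms(2)
proof (induct I rule: finite_induct)
  case empty then show ?case using lin_zero[OF assms(1)] by simp
next
  case (insert x F)
  have "T (\<lambda>a d b. \<Sum>i\<in>insert x F. c i * f i a d b)
      = T (\<lambda>a d b. c x * f x a d b + (\<Sum>i\<in>F. c i * f i a d b))"
    using insert by simp
  also have "\<dots> = (\<lambda>a d b. c x * T (f x) a d b + T (\<lambda>a d b. \<Sum>i\<in>F. c i * f i a d b) a d b)"
    by (rule lin_app[OF assms(1)])
  finally show ?case using insert by simp
qed

lemma lin_Lg: "lin (Lg k g)"
  unfolding lin_def Lg_def LA_def LAs_def LS_def
  by (cases g) (auto simp: fun_eq_iff algebra_simps add_divide_distrib diff_divide_distrib)

lemma lin_W: "lin (W k w)"
proof (induct w)
  case Nil then show ?case by (simp add: lin_def)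
next
  case (Cons g w)
  then show ?case using lin_Lg[of k g] unfolding lin_def by simp
qed

lemma W_append: "W k (u @ v) f = W k u (W k v f)"
  by (induct u) auto

lemma R_superset: "finite S \<Longrightarrow> Poly_Mapping.keys p \<subseteq> S \<Longrightarrow>
   R k p f = (\<lambda>a d b. \<Sum>w\<in>S. Poly_Mapping.lookup p w * W k w f a d b)"
  unfolding R_def
  by (rule ext)+ (rule sum.mono_neutral_left, auto simp: in_keys_iff)

lemma R_add: "R k (p + q) f = (\<lambda>a d b. R k p f a d b + R k q f a d b)"
proof -
  let ?S = "Poly_Mapping.keys p \<union> Poly_Mapping.keys q"
  have f: "finite ?S" by simp
  show ?thesis
    using R_superset[OF f, of p] R_superset[OF f, of q] R_superset[OF f, of "p+q"] keys_add[of p q]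
    by (simp add: lookup_add algebra_simps sum.distrib)
qed

lemma R_zero: "R k 0 f = (\<lambda>a d b. 0)"
  by (simp add: R_def)

lemma R_sum: "finite I \<Longrightarrow> R k (\<Sum>i\<in>I. P i) f = (\<lambda>a d b. \<Sum>i\<in>I. R k (P i) f a d b)"
  by (induct I rule: finite_induct) (simp_all add: R_zero R_add)

lemma R_single: "R k (Poly_Mapping.single w c) f = (\<lambda>a d b. c * W k w f a d b)"
  by (cases "c = 0") (simp_all add: R_def)

lemma R_mult: "R k (p * q) f = R k p (R k q f)"
proof -
  have "R k (p * q) f = R k (fmul p q) f" by (simp add: fmul_eq)
  also have "\<dots> = (\<lambda>a d b. \<Sum>u\<in>Poly_Mapping.keys p. \<Sum>v\<in>Poly_Mapping.keys q.
      Poly_Mapping.lookup p u * (Poly_Mapping.lookup q v * W k u (W k v f) a d b))"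
    unfolding fmul_def by (simp add: R_sum R_single W_append algebra_simps)
  also have "\<dots> = R k p (R k q f)"
    unfolding R_def[of k p] 
    by (simp add: R_def[of k q] lin_sum[OF lin_W] sum_distrib_left)
  finally show ?thesis .
qed

lemma R_uminus: "R k (- p) f = (\<lambda>a d b. - R k p f a d b)"
  by (simp add: R_def sum_negf)

lemma R_diff: "R k (p - q) f = (\<lambda>a d b. R k p f a d b - R k q f a d b)"
  using R_add[of k p "-q" f] R_uminus[of k q f] by simp

lemma R_fscal: "R k (fscal c) f = (\<lambda>a d b. c * f a d b)"
  by (simp add: fscal_def R_single)

lemma R_one: "R k 1 f = f"
  using R_fscal[of k 1 f] by (simp add: fscal_one)

lemma R_gen: "R k (Poly_Mapping.single [g] 1) f = Lg k g f"
  by (simp add: R_single)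

lemma R_pow: "R k (p ^ n) f = (R k p ^^ n) f"
  by (induct n arbitrary: f) (simp_all add: R_one R_mult)


lemma R_gx: "R k gx f = Lg k GX f" by (simp add: gx_def R_gen)
lemma R_gy: "R k gy f = Lg k GY f" by (simp add: gy_def R_gen)
lemma R_gs: "R k gs f = LS f" by (simp add: gs_def R_gen Lg_def)

lemma R_Aop: "R k Aop f = LA k f"
  by (simp add: Aop_def R_add R_gx R_gy Lg_def add_divide_distrib[symmetric])
lemma R_Astar: "R k Astar f = LAs f"
  by (simp add: Astar_def R_diff R_gx R_gy Lg_def diff_divide_distrib[symmetric])

lemma rel1: "R k (fmul gy gx - fmul gx gy - fscal (1/2) - fmul (fscal k) gs) f = (\<lambda>a d b. 0)"
proof -
  have "R k (fmul gy gx - fmul gx gy - fscal (1/2) - fmul (fscal k) gs) f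
     = (\<lambda>a d b. Lg k GY (Lg k GX f) a d b - Lg k GX (Lg k GY f) a d b - f a d b / 2 - k * LS f a d b)"
    by (simp add: fmul_eq R_diff R_mult R_gx R_gy R_gs R_fscal)
  also have "\<dots> = (\<lambda>a d b. 0)"
  proof (intro ext)
    fix a d b
    show "Lg k GY (Lg k GX f) a d b - Lg k GX (Lg k GY f) a d b - f a d b / 2 - k * LS f a d b = 0"
      unfolding Lg_def LA_def LAs_def LS_def
      by (cases a; cases b; cases d) (auto simp: field_simps)
  qed
  finally show ?thesis .
qed

lemma rel2: "R k (fmul gs gs - fone) f = (\<lambda>a d b. 0)"
  by (simp add: fmul_eq fone_eq R_diff R_mult R_gs R_one LS_def fun_eq_iff)

lemma rel3: "R k (fmul (fmul gs gx) gs + gx) f = (\<lambda>a d b. 0)"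
proof -
  have "R k (fmul (fmul gs gx) gs + gx) f = (\<lambda>a d b. LS (Lg k GX (LS f)) a d b + Lg k GX f a d b)"
    by (simp add: fmul_eq R_add R_mult R_gx R_gs)
  also have "\<dots> = (\<lambda>a d b. 0)"
  proof (intro ext)
    fix a d b
    show "LS (Lg k GX (LS f)) a d b + Lg k GX f a d b = 0"
      unfolding Lg_def LA_def LAs_def LS_def
      by (cases a; cases b; cases d) (auto simp: field_simps)
  qed
  finally show ?thesis .
qed

lemma rel4: "R k (fmul (fmul gs gy) gs + gy) f = (\<lambda>a d b. 0)"
proof -
  have "R k (fmul (fmul gs gy) gs + gy) f = (\<lambda>a d b. LS (Lg k GY (LS f)) a d b + Lg k GY f a d b)"
    by (simp add: fmul_eq R_add R_mult R_gy R_gs)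
  also have "\<dots> = (\<lambda>a d b. 0)"
  proof (intro ext)
    fix a d b
    show "LS (Lg k GY (LS f)) a d b + Lg k GY f a d b = 0"
      unfolding Lg_def LA_def LAs_def LS_def
      by (cases a; cases b; cases d) (auto simp: field_simps)
  qed
  finally show ?thesis .
qed

lemma R_zero_fun: "R k p (\<lambda>a d b. 0) = (\<lambda>a d b. 0)"
  by (simp add: R_def lin_zero[OF lin_W])

lemma R_ideal: "r \<in> dahaIdeal k \<Longrightarrow> R k r f = (\<lambda>a d b. 0)"
proof (induct r arbitrary: f rule: dahaIdeal.induct)
  case (rel r) then show ?case
    unfolding relators_def using rel1 rel2 rel3 rel4 by auto
next
  case zero then show ?case by (simp add: R_zero)
next
  case (add a b) then show ?case by (simp add: R_add)
next
  case (lmul a u) then show ?case by (simp add: fmul_eq R_mult R_zero_fun)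
next
  case (rmul a u) then show ?case by (simp add: fmul_eq R_mult)
qed


definition ev :: "nat \<Rightarrow> bool \<Rightarrow> nat \<Rightarrow> V" where
  "ev a0 d0 b0 = (\<lambda>a d b. if a = a0 \<and> d = d0 \<and> b = b0 then 1 else 0)"

lemma LA_ev: "LA k (ev 0 False m) = ev 0 False (Suc m)"
  by (auto simp: LA_def ev_def fun_eq_iff)
lemma LS_ev: "LS (ev 0 d m) = ev 0 (\<not> d) m"
  by (auto simp: LS_def ev_def fun_eq_iff)
lemma LAs_ev: "LAs (ev a d m) = ev (Suc a) d m"
  by (auto simp: LAs_def ev_def fun_eq_iff)

lemma LA_pow_ev: "(LA k ^^ n) (ev 0 False m) = ev 0 False (n + m)"
  by (induct n) (simp_all add: LA_ev)
lemma LAs_pow_ev: "(LAs ^^ n) (ev a d m) = ev (n + a) d m"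
  by (induct n) (simp_all add: LAs_ev)

lemma R_Aop': "R k Aop = LA k" by (rule ext) (rule R_Aop)
lemma R_Astar': "R k Astar = LAs" by (rule ext) (rule R_Astar)

lemma R_basis_elem: "R k (basis_elem (a, d, b)) (ev 0 False 0) = ev a d b"
  by (cases d) (simp_all add: basis_elem_def fmul_eq fpow_eq fone_eq R_mult R_pow R_Aop' R_Astar'
      R_gs R_one LA_pow_ev LS_ev LAs_pow_ev)

lemma R_basis_elem': "R k (basis_elem t) (ev 0 False 0) = ev (fst t) (fst (snd t)) (snd (snd t))"
  by (cases t) (simp add: R_basis_elem)

lemma R_basis_sum: "R k (basis_sum c) (ev 0 False 0) = (\<lambda>a d b. Poly_Mapping.lookup c (a, d, b))"
proof -
  have "R k (basis_sum c) (ev 0 False 0) = (\<lambda>a d b. \<Sum>t\<in>Poly_Mapping.keys c.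
      Poly_Mapping.lookup c t * ev (fst t) (fst (snd t)) (snd (snd t)) a d b)"
    unfolding basis_sum_def
    by (simp add: R_sum fmul_eq R_mult R_fscal R_basis_elem')
  also have "\<dots> = (\<lambda>a d b. Poly_Mapping.lookup c (a, d, b))"
  proof (intro ext)
    fix a d b
    have "(\<Sum>t\<in>Poly_Mapping.keys c. Poly_Mapping.lookup c t * ev (fst t) (fst (snd t)) (snd (snd t)) a d b)
        = (\<Sum>t\<in>Poly_Mapping.keys c. if t = (a, d, b) then Poly_Mapping.lookup c t else 0)"
      by (rule sum.cong) (auto simp: ev_def)
    also have "\<dots> = Poly_Mapping.lookup c (a, d, b)"
      by (auto simp: in_keys_iff)
    finally show "(\<Sum>t\<in>Poly_Mapping.keys c. Poly_Mapping.lookup c t * ev (fst t) (fst (snd t)) (snd (snd t)) a d b)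
        = Poly_Mapping.lookup c (a, d, b)" .
  qed
  finally show ?thesis .
qed

lemma rep_R: "dahaRep k h c \<Longrightarrow> R k h (ev 0 False 0) = (\<lambda>a d b. Poly_Mapping.lookup c (a, d, b))"
  unfolding dahaRep_def
  using R_ideal[of "h - basis_sum c" k "ev 0 False 0"] R_basis_sum[of k c]
  by (simp add: R_diff fun_eq_iff)

lemma rep_unique: "dahaRep k h c1 \<Longrightarrow> dahaRep k h c2 \<Longrightarrow> c1 = c2"
proof -
  assume "dahaRep k h c1" "dahaRep k h c2"
  from rep_R[OF this(1)] rep_R[OF this(2)]
  have "\<And>a d b. Poly_Mapping.lookup c1 (a, d, b) = Poly_Mapping.lookup c2 (a, d, b)"
    by (metis)
  then show "c1 = c2" by (intro poly_mapping_eqI) auto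
qed


abbreviation I where "I k \<equiv> dahaIdeal k"

lemma I_mult_left: "p \<in> I k \<Longrightarrow> u * p \<in> I k"
  using dahaIdeal.lmul[of p k u] by (simp add: fmul_eq)
lemma I_mult_right: "p \<in> I k \<Longrightarrow> p * u \<in> I k"
  using dahaIdeal.rmul[of p k u] by (simp add: fmul_eq)
lemma I_add: "p \<in> I k \<Longrightarrow> q \<in> I k \<Longrightarrow> p + q \<in> I k"
  by (rule dahaIdeal.add)
lemma I_uminus: "p \<in> I k \<Longrightarrow> - p \<in> I k"
  using I_mult_left[of p k "-1"] by simp
lemma I_diff: "p \<in> I k \<Longrightarrow> q \<in> I k \<Longrightarrow> p - q \<in> I k"
  using I_add[of p k "-q"] I_uminus[of q k] by simp
lemma I_zero: "0 \<in> I k" by (rule dahaIdeal.zero)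

definition cg :: "complex \<Rightarrow> fa \<Rightarrow> fa \<Rightarrow> bool" where
  "cg k p q \<longleftrightarrow> p - q \<in> I k"

lemma cg_refl: "cg k p p" by (simp add: cg_def I_zero)
lemma cg_sym: "cg k p q \<Longrightarrow> cg k q p"
  unfolding cg_def using I_uminus by fastforce
lemma cg_trans: "cg k p q \<Longrightarrow> cg k q r \<Longrightarrow> cg k p r"
  unfolding cg_def using I_add by fastforce
lemma cg_add: "cg k p q \<Longrightarrow> cg k p' q' \<Longrightarrow> cg k (p + p') (q + q')"
  unfolding cg_def using I_add by (fastforce simp: algebra_simps)
lemma cg_mult: "cg k p q \<Longrightarrow> cg k (u * p * v) (u * q * v)"
  unfolding cg_def using I_mult_left I_mult_right
  by (metis left_diff_distrib right_diff_distrib)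
lemma cg_mult_l: "cg k p q \<Longrightarrow> cg k (u * p) (u * q)"
  using cg_mult[of k p q u 1] by simp
lemma cg_mult_r: "cg k p q \<Longrightarrow> cg k (p * v) (q * v)"
  using cg_mult[of k p q 1 v] by simp
lemma cg_eq: "p = q \<Longrightarrow> cg k p q" by (simp add: cg_refl)

definition S :: "complex \<Rightarrow> fa set" where "S k = {h. \<exists>c. dahaRep k h c}"

lemma basis_sum_superset: "finite T \<Longrightarrow> Poly_Mapping.keys c \<subseteq> T \<Longrightarrow>
   basis_sum c = (\<Sum>t\<in>T. fscal (Poly_Mapping.lookup c t) * basis_elem t)"
  unfolding basis_sum_def fmul_eq
  by (rule sum.mono_neutral_left) (auto simp: in_keys_iff fscal_zero)

lemma S_cong: "cg k h h' \<Longrightarrow> h' \<in> S k \<Longrightarrow> h \<in> S k"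
  unfolding S_def dahaRep_def cg_def
  using I_add by fastforce

lemma S_add: "h1 \<in> S k \<Longrightarrow> h2 \<in> S k \<Longrightarrow> h1 + h2 \<in> S k"
proof -
  assume "h1 \<in> S k" "h2 \<in> S k"
  then obtain c1 c2 where c: "h1 - basis_sum c1 \<in> I k" "h2 - basis_sum c2 \<in> I k"
    by (auto simp: S_def dahaRep_def)
  let ?T = "Poly_Mapping.keys c1 \<union> Poly_Mapping.keys c2"
  have "basis_sum (c1 + c2) = basis_sum c1 + basis_sum c2"
    using basis_sum_superset[of ?T c1] basis_sum_superset[of ?T c2]
       basis_sum_superset[of ?T "c1 + c2"] keys_add[of c1 c2]
    by (simp add: lookup_add fscal_add distrib_right sum.distrib)
  then have "h1 + h2 - basis_sum (c1 + c2) \<in> I k"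
    using I_add[OF c] by (simp add: algebra_simps)
  then show ?thesis by (auto simp: S_def dahaRep_def)
qed

lemma S_zero: "0 \<in> S k"
  unfolding S_def dahaRep_def mem_Collect_eq
  by (rule exI[of _ 0]) (simp add: basis_sum_def I_zero)

lemma S_scal: "h \<in> S k \<Longrightarrow> fscal x * h \<in> S k"
proof -
  assume "h \<in> S k"
  then obtain c where c: "h - basis_sum c \<in> I k"
    by (auto simp: S_def dahaRep_def)
  let ?c = "Poly_Mapping.map (\<lambda>y. x * y) c"
  have lk: "Poly_Mapping.lookup ?c t = x * Poly_Mapping.lookup c t" for t
    by (simp add: Poly_Mapping.map.rep_eq when_def)
  have "Poly_Mapping.keys ?c \<subseteq> Poly_Mapping.keys c" by (auto simp: in_keys_iff lk)
  then have "basis_sum ?c = fscal x * basis_sum c"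
    using basis_sum_superset[of "Poly_Mapping.keys c" ?c] basis_sum_superset[of "Poly_Mapping.keys c" c]
    by (simp add: lk fscal_mult sum_distrib_left mult.assoc)
  then have "fscal x * h - basis_sum ?c \<in> I k"
    using I_mult_left[OF c, of "fscal x"] by (simp add: algebra_simps)
  then show ?thesis by (auto simp: S_def dahaRep_def)
qed

lemma S_sum: "finite A \<Longrightarrow> (\<And>i. i \<in> A \<Longrightarrow> P i \<in> S k) \<Longrightarrow> (\<Sum>i\<in>A. P i) \<in> S k"
  by (induct A rule: finite_induct) (auto simp: S_zero S_add)

lemma S_basis: "basis_elem t \<in> S k"
  unfolding S_def dahaRep_def mem_Collect_eq
  by (rule exI[of _ "Poly_Mapping.single t 1"]) (simp add: basis_sum_def fmul_eq fscal_one I_zero)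

lemma S_lmul: assumes "\<And>t. G * basis_elem t \<in> S k" "h \<in> S k" shows "G * h \<in> S k"
proof -
  obtain c where c: "h - basis_sum c \<in> I k" using assms(2) by (auto simp: S_def dahaRep_def)
  have "G * basis_sum c = (\<Sum>t\<in>Poly_Mapping.keys c. fscal (Poly_Mapping.lookup c t) * (G * basis_elem t))"
    unfolding basis_sum_def fmul_eq sum_distrib_left
    by (rule sum.cong) (simp_all, metis mult.assoc fscal_central)
  also have "\<dots> \<in> S k" by (rule S_sum) (auto intro: S_scal assms(1))
  finally show ?thesis
    using S_cong[of k "G * h" "G * basis_sum c"] cg_mult_l[of k h "basis_sum c" G] c
    by (simp add: cg_def)
qed


lemma relI: "r \<in> relators k \<Longrightarrow> r \<in> I k" by (rule dahaIdeal.rel)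

lemma r1: "gy * gx - gx * gy - fscal (1/2) - fscal k * gs \<in> I k"
  using relI[of _ k] by (simp add: relators_def fmul_eq)
lemma r2: "gs * gs - 1 \<in> I k"
  using relI[of _ k] by (simp add: relators_def fmul_eq fone_eq)
lemma r3: "gs * gx * gs + gx \<in> I k"
  using relI[of _ k] by (simp add: relators_def fmul_eq)
lemma r4: "gs * gy * gs + gy \<in> I k"
  using relI[of _ k] by (simp add: relators_def fmul_eq)

lemma anti_gen: assumes "gs * g * gs + g \<in> I k" shows "gs * g + g * gs \<in> I k"
proof -
  have "(gs * g * gs + g) * gs - gs * g * (gs * gs - 1) = gs * g + g * gs"
    by (simp add: algebra_simps)
  then show ?thesis
    using I_diff[OF I_mult_right[OF assms] I_mult_left[OF r2]] by metis
qed

lemma E2: "cg k (gs * gs) 1" using r2 by (simp add: cg_def)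

lemma E1: "cg k (gs * Astar) (- (Astar * gs))"
proof -
  have "gs * Astar - - (Astar * gs) = (gs * gx + gx * gs) - (gs * gy + gy * gs)"
    by (simp add: Astar_def algebra_simps)
  then show ?thesis using I_diff[OF anti_gen[OF r3] anti_gen[OF r4]] by (simp add: cg_def)
qed

lemma E3: "cg k (Aop * gs) (- (gs * Aop))"
proof -
  have "Aop * gs - - (gs * Aop) = (gs * gx + gx * gs) + (gs * gy + gy * gs)"
    by (simp add: Aop_def algebra_simps)
  then show ?thesis using I_add[OF anti_gen[OF r3] anti_gen[OF r4]] by (simp add: cg_def)
qed

lemma fscal2: "fscal 2 = 1 + 1"
  using fscal_add[of 1 1] by (simp add: fscal_one)

lemma E4: "cg k (Aop * Astar) (Astar * Aop + 1 + fscal (2 * k) * gs)"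
proof -
  have a: "fscal 2 * fscal (1/2) = 1" by (simp add: fscal_mult[symmetric] fscal_one)
  have b: "fscal 2 * fscal k = fscal (2 * k)" by (simp add: fscal_mult[symmetric])
  have "fscal 2 * (gy * gx - gx * gy - fscal (1/2) - fscal k * gs)
      = fscal 2 * (gy * gx - gx * gy) - fscal 2 * fscal (1/2) - (fscal 2 * fscal k) * gs"
    by (simp add: algebra_simps)
  also have "\<dots> = (1 + 1) * (gy * gx - gx * gy) - 1 - fscal (2 * k) * gs"
    using a b fscal2 by simp
  also have "\<dots> = Aop * Astar - (Astar * Aop + 1 + fscal (2 * k) * gs)"
    by (simp add: Aop_def Astar_def algebra_simps mult_2)
  finally have "fscal 2 * (gy * gx - gx * gy - fscal (1/2) - fscal k * gs)
     = Aop * Astar - (Astar * Aop + 1 + fscal (2 * k) * gs)" .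
  then show ?thesis unfolding cg_def using I_mult_left[OF r1[of k], of "fscal 2"] by simp
qed


lemma be_eq: "basis_elem (a, d, b) = Astar ^ a * (if d then gs else 1) * Aop ^ b"
  by (simp add: basis_elem_def fmul_eq fpow_eq fone_eq)

lemma L_Astar: "Astar * basis_elem (a, d, b) = basis_elem (Suc a, d, b)"
  by (simp add: be_eq mult.assoc)

lemma fscal_comm: "p * fscal c = fscal c * p" by (simp add: fscal_central)

lemma gs_Astar_pow: "cg k (gs * Astar ^ a) (fscal ((-1) ^ a) * Astar ^ a * gs)"
proof (induct a)
  case 0 then show ?case by (simp add: fscal_one cg_refl)
next
  case (Suc a)
  have 1: "cg k ((gs * Astar) * Astar ^ a) ((- (Astar * gs)) * Astar ^ a)"
    by (rule cg_mult_r[OF E1])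
  have eqA: "(gs * Astar) * Astar ^ a = gs * Astar ^ Suc a" by (simp add: mult.assoc)
  have eqB: "(- (Astar * gs)) * Astar ^ a = (- Astar) * (gs * Astar ^ a)" by (simp add: mult.assoc)
  have 2: "cg k ((- Astar) * (gs * Astar ^ a)) ((- Astar) * (fscal ((-1) ^ a) * Astar ^ a * gs))"
    by (rule cg_mult_l[OF Suc])
  have 3: "(- Astar) * (fscal ((-1) ^ a) * Astar ^ a * gs) = fscal ((-1) ^ Suc a) * Astar ^ Suc a * gs"
  proof -
    have "(- Astar) * (fscal ((-1) ^ a) * Astar ^ a * gs) = - ((Astar * fscal ((-1) ^ a)) * Astar ^ a * gs)"
      by (simp add: mult.assoc)
    also have "\<dots> = - (fscal ((-1) ^ a) * Astar * Astar ^ a * gs)"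
      by (simp add: fscal_comm)
    also have "\<dots> = fscal ((-1) ^ Suc a) * Astar ^ Suc a * gs"
      by (simp add: fscal_minus mult.assoc)
    finally show ?thesis .
  qed
  show ?case using cg_trans[OF 1[unfolded eqA eqB] 2[unfolded 3]] .
qed

lemma L_gs: "gs * basis_elem (a, d, b) \<in> S k"
proof -
  have 1: "cg k (gs * basis_elem (a, d, b))
      (fscal ((-1) ^ a) * Astar ^ a * gs * ((if d then gs else 1) * Aop ^ b))"
    using cg_mult_r[OF gs_Astar_pow[of k a], of "(if d then gs else 1) * Aop ^ b"]
    by (simp add: be_eq mult.assoc)
  show ?thesis
  proof (cases d)
    case False
    then have eq: "fscal ((-1) ^ a) * Astar ^ a * gs * ((if d then gs else 1) * Aop ^ b)
        = fscal ((-1) ^ a) * basis_elem (a, True, b)"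
      by (simp add: be_eq mult.assoc)
    show ?thesis by (rule S_cong[OF 1[unfolded eq]], intro S_scal S_basis)
  next
    case True
    have 2: "cg k (fscal ((-1) ^ a) * Astar ^ a * (gs * gs) * Aop ^ b)
                  (fscal ((-1) ^ a) * Astar ^ a * 1 * Aop ^ b)"
      by (rule cg_mult[OF E2])
    have eq3: "fscal ((-1) ^ a) * Astar ^ a * 1 * Aop ^ b = fscal ((-1) ^ a) * basis_elem (a, False, b)"
      by (simp add: be_eq mult.assoc)
    have eq4: "fscal ((-1) ^ a) * Astar ^ a * gs * ((if d then gs else 1) * Aop ^ b)
       = fscal ((-1) ^ a) * Astar ^ a * (gs * gs) * Aop ^ b"
      using True by (simp add: mult.assoc)
    show ?thesis by (rule S_cong[OF cg_trans[OF 1[unfolded eq4] 2[unfolded eq3]]], intro S_scal S_basis)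
  qed
qed

lemma S_Astar: "h \<in> S k \<Longrightarrow> Astar * h \<in> S k"
  by (rule S_lmul) (auto simp: L_Astar S_basis)
lemma S_gs: "h \<in> S k \<Longrightarrow> gs * h \<in> S k"
  by (rule S_lmul) (auto simp: L_gs)

lemma L_Aop: "Aop * basis_elem (a, d, b) \<in> S k"
proof (induct a arbitrary: d b)
  case 0
  show ?case
  proof (cases d)
    case False
    then have "Aop * basis_elem (0, d, b) = basis_elem (0, False, Suc b)"
      by (simp add: be_eq)
    then show ?thesis by (simp add: S_basis)
  next
    case True
    have "cg k (Aop * gs * Aop ^ b) (- (gs * Aop) * Aop ^ b)"
      by (rule cg_mult_r[OF E3])
    moreover have "- (gs * Aop) * Aop ^ b = fscal (-1) * basis_elem (0, True, Suc b)"
      by (simp add: be_eq fscal_minus fscal_one mult.assoc)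
    moreover have "Aop * basis_elem (0, d, b) = Aop * gs * Aop ^ b"
      using True by (simp add: be_eq mult.assoc)
    ultimately have "cg k (Aop * basis_elem (0, d, b)) (fscal (-1) * basis_elem (0, True, Suc b))"
      by simp
    then show ?thesis by (rule S_cong, intro S_scal S_basis)
  qed
next
  case (Suc a)
  let ?Y = "basis_elem (a, d, b)"
  have e: "Aop * basis_elem (Suc a, d, b) = (Aop * Astar) * ?Y"
    by (simp add: be_eq mult.assoc)
  have c: "cg k ((Aop * Astar) * ?Y) ((Astar * Aop + 1 + fscal (2 * k) * gs) * ?Y)"
    by (rule cg_mult_r[OF E4])
  have "(Astar * Aop + 1 + fscal (2 * k) * gs) * ?Y
      = Astar * (Aop * ?Y) + ?Y + fscal (2 * k) * (gs * ?Y)"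
    by (simp add: algebra_simps)
  also have "\<dots> \<in> S k"
    by (intro S_add S_Astar S_scal S_gs Suc S_basis)
  finally show ?case unfolding e by (rule S_cong[OF c])
qed

lemma S_Aop: "h \<in> S k \<Longrightarrow> Aop * h \<in> S k"
  by (rule S_lmul) (auto simp: L_Aop)

lemma half_twice: "fscal (1/2) * (p + p) = p"
proof -
  have pp: "p + p = fscal 2 * p" by (simp add: fscal2 distrib_right mult_2)
  have "fscal (1/2) * (p + p) = (fscal (1/2) * fscal 2) * p"
    unfolding pp by (simp add: mult.assoc)
  also have "\<dots> = p" by (simp add: fscal_mult[symmetric] fscal_one)
  finally show ?thesis .
qed

lemma gx_eq: "gx = fscal (1/2) * (Aop + Astar)"
  using half_twice[of gx] by (simp add: Aop_def Astar_def algebra_simps)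
lemma gy_eq: "gy = fscal (1/2) * (Aop - Astar)"
  using half_twice[of gy] by (simp add: Aop_def Astar_def algebra_simps)

lemma S_gx: "h \<in> S k \<Longrightarrow> gx * h \<in> S k"
  by (simp add: gx_eq mult.assoc distrib_right S_scal S_add S_Aop S_Astar)
lemma S_gy: "h \<in> S k \<Longrightarrow> gy * h \<in> S k"
proof -
  assume h: "h \<in> S k"
  have "gy * h = fscal (1/2) * (Aop * h + fscal (-1) * (Astar * h))"
    by (simp add: gy_eq fscal_minus fscal_one algebra_simps)
  then show ?thesis by (simp add: S_scal S_add S_Aop S_Astar h)
qed

lemma S_word: "Poly_Mapping.single w 1 \<in> S k"
proof (induct w)
  case Nil
  have "Poly_Mapping.single [] (1::complex) = basis_elem (0, False, 0)"
    by (simp add: be_eq flip: zero_list_def)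
  then show ?case by (simp add: S_basis)
next
  case (Cons g w)
  have "Poly_Mapping.single (g # w) (1::complex) = Poly_Mapping.single [g] 1 * Poly_Mapping.single w 1"
    by (simp add: mult_single plus_list_def)
  then show ?case using Cons
    by (cases g) (simp_all add: S_gx S_gy S_gs flip: gx_def gy_def gs_def)
qed

lemma S_all: "h \<in> S k"
proof -
  have "h = (\<Sum>u\<in>Poly_Mapping.keys h. fscal (Poly_Mapping.lookup h u) * Poly_Mapping.single u 1)"
    using pm_expand[of h] by (simp add: fscal_def mult_single plus_list_def zero_list_def)
  also have "\<dots> \<in> S k" by (intro S_sum S_scal S_word) auto
  finally show ?thesis .
qed

lemma exists_rep: "\<exists>c. dahaRep k h c"
  using S_all[of h k] by (simp add: S_def)


definition psi :: "complex \<Rightarrow> fa \<Rightarrow> complex" where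
  "psi k h = R k h (ev 0 False 0) 0 False 0 + R k h (ev 0 False 0) 0 True 0"

lemma coinv_psi: "coinv k h = psi k h"
proof -
  obtain c where c: "dahaRep k h c" using exists_rep by blast
  have "(THE c. dahaRep k h c) = c"
    using c rep_unique by blast
  then show ?thesis
    using rep_R[OF c] by (simp add: coinv_def psi_def fun_eq_iff)
qed

lemma psi_add: "psi k (p + q) = psi k p + psi k q"
  by (simp add: psi_def R_add)
lemma psi_scal: "psi k (fscal c * p) = c * psi k p"
  by (simp add: psi_def R_mult R_fscal algebra_simps)
lemma psi_scal_r: "psi k (p * fscal c) = c * psi k p"
  by (simp add: fscal_comm psi_scal)
lemma psi_Astar: "psi k (Astar * h) = 0"
  by (simp add: psi_def R_mult R_Astar LAs_def)
lemma psi_gs: "psi k (gs * h) = psi k h"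
  by (simp add: psi_def R_mult R_gs LS_def)
lemma psi_one: "psi k 1 = 1"
  by (simp add: psi_def R_one ev_def)

definition Z :: "V set" where "Z = {f. \<forall>a d. f a d 0 = 0}"

lemma Lg_Z: "f \<in> Z \<Longrightarrow> Lg k g f \<in> Z"
  by (cases g) (auto simp: Z_def Lg_def LA_def LAs_def LS_def)
lemma W_Z: "f \<in> Z \<Longrightarrow> W k w f \<in> Z"
  by (induct w) (auto intro: Lg_Z)
lemma R_Z: "f \<in> Z \<Longrightarrow> R k p f \<in> Z"
  using W_Z[of f k] by (auto simp: Z_def R_def)

lemma psi_Aop: "psi k (h * Aop) = 0"
proof -
  have "LA k (ev 0 False 0) \<in> Z" by (simp only: LA_ev) (simp add: Z_def ev_def)
  then have "R k h (LA k (ev 0 False 0)) \<in> Z" by (rule R_Z)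
  then show ?thesis by (simp add: psi_def R_mult R_Aop Z_def)
qed

lemma cg_R: "cg k p q \<Longrightarrow> R k p = R k q"
  unfolding cg_def using R_ideal[of "p - q" k] by (auto simp: R_diff fun_eq_iff)

lemma psi_cg: "cg k p q \<Longrightarrow> psi k p = psi k q"
  by (simp add: psi_def cg_R)

lemma E5: "cg k (gx * gs) (- (gs * gx))"
proof -
  have "gx * gs - - (gs * gx) = gs * gx + gx * gs" by (simp add: algebra_simps)
  then show ?thesis using anti_gen[OF r3[of k]] by (simp add: cg_def add.commute)
qed

lemma X_pow_gs: "cg k (gx ^ a * gs) (fscal ((-1) ^ a) * gs * gx ^ a)"
proof (induct a)
  case 0 then show ?case by (simp add: fscal_one cg_refl)
next
  case (Suc a)
  have 1: "cg k (gx * (gx ^ a * gs)) (gx * (fscal ((-1) ^ a) * gs * gx ^ a))"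
    by (rule cg_mult_l[OF Suc])
  have 2: "cg k (fscal ((-1) ^ a) * (gx * gs) * gx ^ a) (fscal ((-1) ^ a) * (- (gs * gx)) * gx ^ a)"
    by (rule cg_mult[OF E5])
  have eq1: "gx * (fscal ((-1) ^ a) * gs * gx ^ a) = fscal ((-1) ^ a) * (gx * gs) * gx ^ a"
    by (simp add: mult.assoc[symmetric] fscal_comm)
  have eq2: "fscal ((-1) ^ a) * (- (gs * gx)) * gx ^ a = fscal ((-1) ^ Suc a) * gs * gx ^ Suc a"
    by (simp add: fscal_minus mult.assoc)
  have eq3: "gx * (gx ^ a * gs) = gx ^ Suc a * gs" by (simp add: mult.assoc)
  show ?case using cg_trans[OF 1[unfolded eq1] 2[unfolded eq2]] unfolding eq3 .
qed

lemma psi_X_gs: "psi k (gx ^ m * gs * gx ^ j) = (-1) ^ m * psi k (gx ^ (m + j))"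
proof -
  have "psi k (gx ^ m * gs * gx ^ j) = psi k (fscal ((-1) ^ m) * gs * gx ^ m * gx ^ j)"
    by (rule psi_cg, rule cg_mult_r[OF X_pow_gs])
  also have "\<dots> = (-1) ^ m * psi k (gx ^ (m + j))"
    by (simp add: mult.assoc psi_scal psi_gs power_add)
  finally show ?thesis .
qed

lemma R_comm: "R k (gx * Astar) = R k (Astar * gx + fscal (1/2) + fscal k * gs)"
proof (intro ext)
  fix f a d b
  show "R k (gx * Astar) f a d b = R k (Astar * gx + fscal (1/2) + fscal k * gs) f a d b"
    unfolding R_mult R_add R_gx R_Astar R_fscal R_gs
    unfolding Lg_def LA_def LAs_def LS_def
    by (cases a; cases b; cases d) (auto simp: field_simps)
qed

lemma fscal_pull: "p * (fscal c * q) = fscal c * (p * q)"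
  by (metis fscal_comm mult.assoc)

lemma psi_R: "R k p = R k q \<Longrightarrow> psi k (u * p * v) = psi k (u * q * v)"
  by (simp add: psi_def R_mult)

lemma psi_main: "psi k (gx ^ m * Astar * gx ^ j)
   = (of_nat m + 2 * k * (if odd m then 1 else 0)) / 2 * psi k (gx ^ (m + j - 1))"
proof (induct m arbitrary: j)
  case 0 then show ?case by (simp add: psi_Astar)
next
  case (Suc m)
  have "gx ^ Suc m * Astar * gx ^ j = gx ^ m * (gx * Astar) * gx ^ j"
    by (simp only: power_Suc2 mult.assoc)
  then have "psi k (gx ^ Suc m * Astar * gx ^ j) = psi k (gx ^ m * (gx * Astar) * gx ^ j)"
    by (simp only:)
  also have "\<dots> = psi k (gx ^ m * (Astar * gx + fscal (1/2) + fscal k * gs) * gx ^ j)"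
    by (rule psi_R[OF R_comm])
  also have "\<dots> = psi k (gx ^ m * Astar * gx ^ Suc j) + psi k (fscal (1/2) * gx ^ (m + j))
       + psi k (fscal k * (gx ^ m * gs * gx ^ j))"
  proof -
    have "gx ^ m * (Astar * gx + fscal (1/2) + fscal k * gs) * gx ^ j
      = gx ^ m * Astar * gx ^ Suc j + fscal (1/2) * gx ^ (m + j) + fscal k * (gx ^ m * gs * gx ^ j)"
      by (simp add: distrib_left distrib_right mult.assoc fscal_pull power_add)
    then show ?thesis by (simp add: psi_add)
  qed
  also have "\<dots> = (of_nat m + 2 * k * (if odd m then 1 else 0)) / 2 * psi k (gx ^ (m + j))
      + 1/2 * psi k (gx ^ (m + j)) + k * ((-1) ^ m * psi k (gx ^ (m + j)))"
  proof -
    have a: "psi k (gx ^ m * Astar * gx ^ Suc j) = (of_nat m + 2 * k * (if odd m then 1 else 0)) / 2 * psi k (gx ^ (m + j))"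
      using Suc[of "Suc j"] by simp
    show ?thesis by (simp only: a psi_scal psi_X_gs)
  qed
  also have "\<dots> = (of_nat (Suc m) + 2 * k * (if odd (Suc m) then 1 else 0)) / 2 * psi k (gx ^ (Suc m + j - 1))"
    by (cases "even m") (simp_all add: field_simps)
  finally show ?case .
qed

lemma psi_rec: "psi k (gx ^ Suc (Suc m)) = (of_nat (Suc m) + 2 * k * (if even m then 1 else 0)) / 4 * psi k (gx ^ m)"
proof -
  have e1: "gx ^ Suc (Suc m) = gx ^ Suc m * (fscal (1/2) * (Aop + Astar))"
    by (simp only: power_Suc2 flip: gx_eq)
  have e2: "Y * (fscal c * (A + B)) = Y * A * fscal c + Y * B * 1 * fscal c" for Y c A B
    by (simp add: fscal_comm distrib_left distrib_right mult.assoc[symmetric])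
  have "psi k (gx ^ Suc (Suc m)) = psi k (gx ^ Suc m * Aop * fscal (1/2)) + psi k (gx ^ Suc m * Astar * gx ^ 0 * fscal (1/2))"
    unfolding e1 e2 power_0 by (simp only: psi_add)
  also have "\<dots> = (of_nat (Suc m) + 2 * k * (if even m then 1 else 0)) / 4 * psi k (gx ^ m)"
    by (simp only: psi_scal_r psi_Aop psi_main) simp
  finally show ?thesis .
qed

lemma psi_X1: "psi k gx = 0"
  using psi_Aop[of k 1] psi_Astar[of k 1] 
  by (simp add: gx_eq psi_scal psi_add)

lemma psi_odd: "psi k (gx ^ (2 * p + 1)) = 0"
proof (induct p)
  case 0 then show ?case by (simp add: psi_X1)
next
  case (Suc p)
  have "gx ^ (2 * Suc p + 1) = gx ^ Suc (Suc (2 * p + 1))" by simp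
  then show ?case using Suc by (simp only: psi_rec) simp
qed

lemma psi_even: "psi k (gx ^ (2 * p)) = (\<Prod>i<p. (1/2 + k + of_nat i)) / 2 ^ p"
proof (induct p)
  case 0 then show ?case by (simp add: psi_one)
next
  case (Suc p)
  have "gx ^ (2 * Suc p) = gx ^ Suc (Suc (2 * p))" by simp
  then have "psi k (gx ^ (2 * Suc p)) = (of_nat (Suc (2 * p)) + 2 * k) / 4 * psi k (gx ^ (2 * p))"
    by (simp only: psi_rec) simp
  also have "\<dots> = (of_nat (Suc (2 * p)) + 2 * k) / 4 * ((\<Prod>i<p. (1/2 + k + of_nat i)) / 2 ^ p)"
    by (simp only: Suc)
  also have "\<dots> = ((1/2 + k + of_nat p) / 2) * ((\<Prod>i<p. (1/2 + k + of_nat i)) / 2 ^ p)"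
  proof -
    have "(of_nat (Suc (2 * p)) + 2 * k) / 4 = ((1/2 + k + of_nat p) / 2 :: complex)"
      by (simp add: field_simps)
    then show ?thesis by (simp only:)
  qed
  also have "\<dots> = (\<Prod>i<Suc p. (1/2 + k + of_nat i)) / 2 ^ Suc p"
    by (simp only: prod.lessThan_Suc power_Suc times_divide_times_eq mult.commute)
  finally show ?case .
qed


lemma gx_pow_single: "gx ^ a = Poly_Mapping.single (replicate a GX) 1"
proof (induct a)
  case 0 then show ?case by (simp flip: zero_list_def)
next
  case (Suc a)
  then show ?case by (simp add: gx_def mult_single plus_list_def)
qed

lemma count_rep: "count_list (replicate a GX) GY = 0"
  by (induct a) auto

lemma fstar_gx_pow: "fstar (gx ^ a) = gx ^ a"
  by (simp add: gx_pow_single fstar_def count_rep)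

lemma bracket_psi: "bracket k (xpow a) (xpow b) = psi k (gx ^ (a + b))"
  by (simp add: bracket_def xpow_def fpow_eq fmul_eq fstar_gx_pow coinv_psi power_add)

theorem mainTheorem12:
  fixes k :: complex
  shows "(\<forall>h. \<exists>!c. dahaRep k h c) \<and>
         (\<forall>a b. odd (a + b) \<longrightarrow> bracket k (xpow a) (xpow b) = 0) \<and>
         (\<forall>a b p. a + b = 2 * p \<longrightarrow>
             bracket k (xpow a) (xpow b) = (\<Prod>i<p. (1/2 + k + of_nat i)) / 2 ^ p)"
proof (intro conjI allI impI)
  fix h
  show "\<exists>!c. dahaRep k h c" using exists_rep rep_unique by blast
next
  fix a b :: nat
  assume "odd (a + b)"
  then obtain p where "a + b = 2 * p + 1" using oddE by blast
  then show "bracket k (xpow a) (xpow b) = 0" using psi_odd[of k p] by (simp only: bracket_psi)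
next
  fix a b p :: nat
  assume "a + b = 2 * p"
  then show "bracket k (xpow a) (xpow b) = (\<Prod>i<p. (1/2 + k + of_nat i)) / 2 ^ p"
    by (simp add: bracket_psi psi_even)
qed

end
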